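(* Let $k$ be a positive integer, $a=3k+2$, $S=\{a,a+1,a+2\}$, $G=\langle S\rangle$, $t=\lfloor 3k/2\rfloor$, $I_{i,k}=[ia,\,ia+2i]$ for $i\in[0,t+1]$, and $H_{7,k}=\bigcup_{i=0}^{t}I_{i,k}\cup[(t+1)a,\infty[$. Then: (1) $G=H_{7,k}$; (2) $I_{i,k}<I_{i+1,k}$ for every $i\in[0,t]$, and $I_{t,k}<[(t+1)a,\infty[$; (3) $H_{7,k}$ is a $3$-permutation numerical semigroup.
   Context: $\mathbb{N}=\{0,1,2,\dots\}$. A numerical semigroup is a submonoid $G$ of $(\mathbb{N},+,0)$ with $\mathbb{N}\setminus G$ finite; $\langle S\rangle$ is the submonoid generated by $S$. Writing the elements of a numerical semigroup as $0=g_0<g_1<g_2<\cdots$, it is an $n$-permutation numerical semigroup if it is generated by $\{g_1,\dots,g_n\}$ and for every $k\in\mathbb{N}$ the tuple $(g_{kn+1}\bmod n,\dots,g_{kn+n}\bmod n)$ contains exactly one representative of each residue class mod $n$. Notation: $[u,v]=\{x\in\mathbb{N}:u\le x\le v\}$, $[u,\infty[=\{x\in\mathbb{N}:x\ge u\}$; for nonempty $X,Y\subseteq\mathbb{N}$, $X<Y$ means $x<y$ for all $x\in X,y\in Y$. *)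

theory Defs
  imports Main "HOL-Library.Infinite_Set"
begin

inductive_set gen_monoid :: "nat set \<Rightarrow> nat set" for S :: "nat set" where
  zero: "0 \<in> gen_monoid S"
| add: "x \<in> gen_monoid S \<Longrightarrow> s \<in> S \<Longrightarrow> x + s \<in> gen_monoid S"

definition submonoid_nat :: "nat set \<Rightarrow> bool" where
  "submonoid_nat G \<longleftrightarrow> 0 \<in> G \<and> (\<forall>x\<in>G. \<forall>y\<in>G. x + y \<in> G)"

definition numerical_semigroup :: "nat set \<Rightarrow> bool" where
  "numerical_semigroup G \<longleftrightarrow> submonoid_nat G \<and> finite (UNIV - G)"

text \<open>The i-th element (0-indexed, increasing) of G: g_i = enumerate G i.\<close>
definition perm_numerical_semigroup :: "nat \<Rightarrow> nat set \<Rightarrow> bool" where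
  "perm_numerical_semigroup n G \<longleftrightarrow>
     numerical_semigroup G \<and>
     G = gen_monoid {enumerate G i | i. 1 \<le> i \<and> i \<le> n} \<and>
     (\<forall>k::nat. bij_betw (\<lambda>j. enumerate G (k * n + j) mod n) {1..n} {..<n})"

definition set_less :: "nat set \<Rightarrow> nat set \<Rightarrow> bool" where
  "set_less X Y \<longleftrightarrow> (\<forall>x\<in>X. \<forall>y\<in>Y. x < y)"

end

theory Submission
  imports Defs "HOL-Library.Discrete_Functions"
begin



definition HH :: "nat \<Rightarrow> nat \<Rightarrow> nat set" where
  "HH a t = (\<Union>i\<in>{0..t}. {i * a .. i * a + 2 * i}) \<union> {(t + 1) * a ..}"

definition ff :: "nat \<Rightarrow> nat \<Rightarrow> nat \<Rightarrow> nat" where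
  "ff a t n = (let i = min (floor_sqrt n) (t+1) in i*a + (n - i^2))"

lemma ff_low: assumes "floor_sqrt n \<le> t" "n = (floor_sqrt n)^2 + d"
  shows "ff a t n = floor_sqrt n * a + d"
proof -
  have m: "min (floor_sqrt n) (t+1) = floor_sqrt n" using assms(1) by simp
  have "n - (floor_sqrt n)^2 = d" using assms(2) by (metis add_diff_cancel_left')
  thus ?thesis unfolding ff_def Let_def m by simp
qed

lemma ff_high: assumes "t < floor_sqrt n" "n = (t+1)^2 + d"
  shows "ff a t n = (t+1) * a + d"
proof -
  have m: "min (floor_sqrt n) (t+1) = t+1" using assms(1) by simp
  have "n - (t+1)^2 = d" using assms(2) by (metis add_diff_cancel_left')
  thus ?thesis unfolding ff_def Let_def m by simp
qed

lemma ff_in: shows "ff a t n \<in> HH a t"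
proof (cases "floor_sqrt n \<le> t")
  case True
  let ?i = "floor_sqrt n"
  have "n < (Suc ?i)^2" by (rule Suc_floor_sqrt_power2_gt)
  moreover obtain d where d: "n = ?i^2 + d" using floor_sqrt_power2_le le_Suc_ex by blast
  ultimately have "d \<le> 2 * ?i" by (simp add: power2_eq_square)
  moreover have "ff a t n = ?i * a + d" using True d by (rule ff_low)
  ultimately show ?thesis using True unfolding HH_def by (auto intro!: bexI[of _ ?i])
next
  case False
  have "(t+1)^2 \<le> (floor_sqrt n)^2" using False by (simp add: power_mono)
  also have "\<dots> \<le> n" by simp
  finally obtain d where d: "n = (t+1)^2 + d" using le_Suc_ex by blast
  have "ff a t n = (t+1) * a + d" using False d by (intro ff_high) auto
  thus ?thesis unfolding HH_def by auto
qed

lemma sqrt_Suc_cases: "floor_sqrt (Suc n) = floor_sqrt n \<or>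
   (floor_sqrt (Suc n) = Suc (floor_sqrt n) \<and> Suc n = (Suc (floor_sqrt n))^2)"
proof -
  let ?i = "floor_sqrt n"
  have a: "?i^2 \<le> n" by simp
  have b: "n < (Suc ?i)^2" by (rule Suc_floor_sqrt_power2_gt)
  show ?thesis
  proof (cases "Suc n = (Suc ?i)^2")
    case True
    hence "floor_sqrt (Suc n) = Suc ?i" by simp
    thus ?thesis using True by simp
  next
    case False
    hence "Suc n < (Suc ?i)^2" using b by simp
    moreover have "?i^2 \<le> Suc n" using a by linarith
    ultimately have "floor_sqrt (Suc n) = ?i" by (intro floor_sqrt_unique) auto
    thus ?thesis by simp
  qed
qed

lemma ff_Suc: "ff a t (Suc n) = Suc (ff a t n) \<or>
   (\<exists>i\<le>t. ff a t n = i*a+2*i \<and> ff a t (Suc n) = Suc i * a \<and> Suc n = (Suc i)^2)"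
proof -
  let ?i = "floor_sqrt n"
  have a: "?i^2 \<le> n" by simp
  have b: "n < (Suc ?i)^2" by (rule Suc_floor_sqrt_power2_gt)
  have hi: "ff a t (Suc n) = Suc (ff a t n)" if F: "t < ?i"
  proof -
    have "(t+1)^2 \<le> ?i^2" using F by (simp add: power_mono)
    also have "\<dots> \<le> n" by simp
    finally obtain d where d: "n = (t+1)^2 + d" using le_Suc_ex by blast
    have "?i \<le> floor_sqrt (Suc n)" by (rule mono_floor_sqrt') simp
    hence "ff a t (Suc n) = (t+1) * a + Suc d" using F d by (intro ff_high) auto
    moreover have "ff a t n = (t+1) * a + d" using F d by (intro ff_high) auto
    ultimately show ?thesis by simp
  qed
  from sqrt_Suc_cases[of n] show ?thesis
  proof
    assume e: "floor_sqrt (Suc n) = ?i"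
    show ?thesis
    proof (cases "?i \<le> t")
      case True
      obtain d where d: "n = ?i^2 + d" using a le_Suc_ex by blast
      have "ff a t n = ?i * a + d" using True d by (rule ff_low)
      moreover have "ff a t (Suc n) = ?i * a + Suc d" using ff_low[of "Suc n" t "Suc d" a] True d e by simp
      ultimately show ?thesis by simp
    next
      case False
      then show ?thesis using hi by simp
    qed
  next
    assume e: "floor_sqrt (Suc n) = Suc ?i \<and> Suc n = (Suc ?i)^2"
    show ?thesis
    proof (cases "?i \<le> t")
      case True
      have n: "n = ?i^2 + 2 * ?i" using e by (simp add: power2_eq_square)
      have "ff a t n = ?i*a+2*?i" using True n by (rule ff_low)
      moreover have "ff a t (Suc n) = Suc ?i * a"
      proof (cases "Suc ?i \<le> t")
        case True
        then show ?thesis using ff_low[of "Suc n" t 0 a] e by simp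
      next
        case False
        then have "Suc ?i = t + 1" using \<open>?i \<le> t\<close> by simp
        then show ?thesis using ff_high[of t "Suc n" 0 a] e by simp
      qed
      ultimately show ?thesis using True e by blast
    next
      case False
      then show ?thesis using hi by simp
    qed
  qed
qed


lemma HH_gap: assumes "i \<le> t" "i*a+2*i < y" "y < Suc i * a" shows "y \<notin> HH a t"
proof
  assume "y \<in> HH a t"
  then consider j where "j \<le> t" "j*a \<le> y" "y \<le> j*a+2*j" | "(t+1)*a \<le> y" unfolding HH_def by auto
  then show False
  proof cases
    case 1
    show False
    proof (cases "j \<le> i")
      case True
      have "j*a+2*j \<le> i*a+2*i" using True by (intro add_mono mult_le_mono) auto
      then show False using 1 assms by linarith
    next
      case False
      have "Suc i * a \<le> j * a" using False by (intro mult_le_mono) auto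
      then show False using 1 assms by linarith
    qed
  next
    case 2
    have "Suc i * a \<le> (t+1) * a" using assms by (intro mult_le_mono) auto
    then show False using 2 assms by linarith
  qed
qed

lemma ff_strict: assumes "2*t < a" shows "ff a t n < ff a t (Suc n)"
  using ff_Suc[of a t n]
proof
  assume "\<exists>i\<le>t. ff a t n = i*a+2*i \<and> ff a t (Suc n) = Suc i * a \<and> Suc n = (Suc i)^2"
  then obtain i where "i \<le> t" "ff a t n = i*a+2*i" "ff a t (Suc n) = Suc i * a" by blast
  then show ?thesis using assms by simp
qed simp

lemma HH_infinite: "infinite (HH a t)"
proof -
  have "{(t+1)*a..} \<subseteq> HH a t" unfolding HH_def by auto
  thus ?thesis using infinite_Ici infinite_super by blast
qed

lemma ff_0: "ff a t 0 = 0"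
  using ff_low[of 0 t 0 a] by simp

lemma enum_ff: assumes "2*t < a" shows "enumerate (HH a t) n = ff a t n"
proof (induction n)
  case 0
  have "0 \<in> HH a t" unfolding HH_def by auto
  then have "(LEAST n. n \<in> HH a t) = 0" by (simp add: Least_equality)
  then show ?case by (simp add: enumerate_0 ff_0)
next
  case (Suc n)
  have "(LEAST s. s \<in> HH a t \<and> ff a t n < s) = ff a t (Suc n)"
  proof (rule Least_equality)
    show "ff a t (Suc n) \<in> HH a t \<and> ff a t n < ff a t (Suc n)"
      using ff_in ff_strict[OF assms] by blast
  next
    fix y assume y: "y \<in> HH a t \<and> ff a t n < y"
    from ff_Suc[of a t n] show "ff a t (Suc n) \<le> y"
    proof
      assume "\<exists>i\<le>t. ff a t n = i*a+2*i \<and> ff a t (Suc n) = Suc i * a \<and> Suc n = (Suc i)^2"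
      then obtain i where i: "i \<le> t" "ff a t n = i*a+2*i" "ff a t (Suc n) = Suc i * a" by blast
      show ?thesis
      proof (rule ccontr)
        assume "\<not> ?thesis"
        then have "y \<notin> HH a t" using HH_gap[of i t a y] i y by simp
        then show False using y by blast
      qed
    qed (use y in simp)
  qed
  then show ?case using enumerate_Suc''[OF HH_infinite] Suc by simp
qed

lemma ff_mod: assumes "a mod 3 = 2" "n mod 3 \<noteq> 0"
  shows "ff a t (Suc n) mod 3 = Suc (ff a t n) mod 3"
  using ff_Suc[of a t n]
proof
  assume "\<exists>i\<le>t. ff a t n = i*a+2*i \<and> ff a t (Suc n) = Suc i * a \<and> Suc n = (Suc i)^2"
  then obtain i where i: "ff a t n = i*a+2*i" "ff a t (Suc n) = Suc i * a" "Suc n = (Suc i)^2" by blast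
  obtain m where m: "a = 3*m+2" using assms(1) by (metis mod_div_mult_eq add.commute mult.commute)
  obtain q r where qr: "i = 3*q + r" "r < 3" by (metis mod_div_mult_eq add.commute mult.commute mod_less_divisor zero_less_numeral)
  have "r = 2"
  proof (rule ccontr)
    assume "r \<noteq> 2"
    then have "r = 0 \<or> r = 1" using qr by auto
    then show False
    proof
      assume "r = 0"
      then have "Suc n = 3*(3*q*q+2*q) + 1" using i(3) qr by (simp add: power2_eq_square algebra_simps)
      then show False using assms(2) by presburger
    next
      assume "r = 1"
      then have "Suc n = 3*(3*q*q+4*q+1) + 1" using i(3) qr by (simp add: power2_eq_square algebra_simps)
      then show False using assms(2) by presburger
    qed
  qed
  have "Suc (ff a t n) = 3*(3*q*m + 4*q + 2*m + 3)" using i(1) qr m \<open>r = 2\<close> by (simp add: algebra_simps)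
  moreover have "ff a t (Suc n) = 3*((q+1)*a)" using i(2) qr \<open>r = 2\<close> by (simp add: algebra_simps)
  ultimately show ?thesis by simp
qed simp

lemma bij3: fixes g :: "nat \<Rightarrow> nat"
  assumes "g 2 mod 3 = Suc (g 1) mod 3" "g 3 mod 3 = Suc (g 2) mod 3"
  shows "bij_betw (\<lambda>j. g j mod 3) {1..3} {..<3}"
proof -
  have A: "{1..3::nat} = {1,2,3}" by auto
  have B: "{..<3::nat} = {0,1,2}" by auto
  have "g 1 mod 3 < 3" by simp
  then have "g 1 mod 3 = 0 \<or> g 1 mod 3 = 1 \<or> g 1 mod 3 = 2" by linarith
  moreover have "g 2 mod 3 = Suc (g 1 mod 3) mod 3" using assms(1) by (simp add: mod_Suc_eq)
  moreover have "g 3 mod 3 = Suc (g 2 mod 3) mod 3" using assms(2) by (simp add: mod_Suc_eq)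
  ultimately show ?thesis unfolding A B bij_betw_def inj_on_def by auto
qed

lemma gen_add: "y \<in> gen_monoid S \<Longrightarrow> x \<in> gen_monoid S \<Longrightarrow> x + y \<in> gen_monoid S"
proof (induction y rule: gen_monoid.induct)
  case zero then show ?case by simp
next
  case (add y s)
  then show ?case using gen_monoid.add[of "x+y" S s] by (simp add: add.assoc)
qed

lemma gen_sub_HH: "x \<in> gen_monoid {a, a+1, a+2} \<Longrightarrow> x \<in> HH a t"
proof (induction x rule: gen_monoid.induct)
  case zero then show ?case unfolding HH_def by auto
next
  case (add x s)
  have s: "a \<le> s" "s \<le> a + 2" using add.hyps(2) by auto
  from add.IH consider i where "i \<le> t" "i*a \<le> x" "x \<le> i*a+2*i" | "(t+1)*a \<le> x" unfolding HH_def by auto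
  then show ?case
  proof cases
    case 1
    show ?thesis
    proof (cases "Suc i \<le> t")
      case True
      then show ?thesis unfolding HH_def using 1 s by (auto intro!: bexI[of _ "Suc i"])
    next
      case False
      then have "i = t" using 1 by simp
      then show ?thesis unfolding HH_def using 1 s by auto
    qed
  next
    case 2 then show ?thesis unfolding HH_def by auto
  qed
qed

lemma gen_lb: "j \<le> 2*i \<Longrightarrow> i*a + j \<in> gen_monoid {a, a+1, a+2}"
proof (induction i arbitrary: j)
  case 0 then show ?case by (simp add: gen_monoid.zero)
next
  case (Suc i)
  show ?case
  proof (cases "j \<le> 2*i")
    case True
    have "(i*a + j) + a \<in> gen_monoid {a, a+1, a+2}" using gen_monoid.add[OF Suc.IH[OF True], of a] by simp
    then show ?thesis by (simp add: algebra_simps)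
  next
    case False
    define d where "d = j - 2*i"
    have d: "j = 2*i + d" "d \<le> 2" "d \<ge> 1" using False Suc.prems unfolding d_def by auto
    have "a + d \<in> {a, a+1, a+2}" using d by auto
    then have "(i*a + 2*i) + (a + d) \<in> gen_monoid {a, a+1, a+2}" using gen_monoid.add[OF Suc.IH[of "2*i"]] by simp
    then show ?thesis using d by (simp add: algebra_simps)
  qed
qed


theorem lemma4p7:
  fixes k :: nat
  assumes "k > 0"
  defines "a \<equiv> 3 * k + 2"
  defines "S \<equiv> {a, a + 1, a + 2}"
  defines "G \<equiv> gen_monoid S"
  defines "t \<equiv> (3 * k) div 2"
  defines "I \<equiv> (\<lambda>i::nat. {i * a .. i * a + 2 * i})"
  defines "H \<equiv> (\<Union>i\<in>{0..t}. I i) \<union> {(t + 1) * a ..}"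
  shows "G = H \<and>
         (\<forall>i\<in>{0..t}. set_less (I i) (I (i + 1))) \<and> set_less (I t) {(t + 1) * a ..} \<and>
         perm_numerical_semigroup 3 H"
proof -
  have HH: "H = HH a t" unfolding H_def I_def HH_def by simp
  have t1: "2*t < a" "a \<le> 2*t+3" "1 \<le> t" unfolding a_def t_def using assms(1) by auto
  have amod: "a mod 3 = 2" unfolding a_def by presburger
  have GH: "G = H"
  proof
    show "G \<subseteq> H" unfolding G_def S_def HH using gen_sub_HH by blast
  next
    show "H \<subseteq> G"
    proof
      fix x assume "x \<in> H"
      then consider i where "i \<le> t" "i*a \<le> x" "x \<le> i*a+2*i" | "(t+1)*a \<le> x"
        unfolding HH HH_def by auto
      then show "x \<in> G"
      proof cases
        case 1
        then have "x = i*a + (x - i*a)" "x - i*a \<le> 2*i" by auto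
        then show ?thesis unfolding G_def S_def using gen_lb by metis
      next
        case 2
        have ap: "a > 0" using t1 by simp
        have "x div a \<ge> t+1" using 2 ap by (metis div_le_mono nonzero_mult_div_cancel_right less_not_refl2)
        moreover have "x mod a < a" using ap by simp
        ultimately have "x mod a \<le> 2 * (x div a)" using t1 by linarith
        moreover have "x = (x div a) * a + x mod a" by simp
        ultimately show ?thesis unfolding G_def S_def using gen_lb by metis
      qed
    qed
  qed
  have L: "\<forall>i\<in>{0..t}. set_less (I i) (I (i + 1))"
  proof
    fix i assume "i \<in> {0..t}"
    then have "i*a + 2*i < (i+1)*a" using t1 by simp
    then show "set_less (I i) (I (i + 1))" unfolding set_less_def I_def by auto
  qed
  have L2: "set_less (I t) {(t + 1) * a ..}"
  proof -
    have "t*a + 2*t < (t+1)*a" using t1 by simp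
    then show ?thesis unfolding set_less_def I_def by auto
  qed
  have E: "\<And>n. enumerate H n = ff a t n" unfolding HH using enum_ff[OF t1(1)] by simp
  have f1: "ff a t 1 = a" using ff_low[of 1 t 0 a] t1 by simp
  have s2: "floor_sqrt 2 = 1" by (rule floor_sqrt_unique) (auto simp: power2_eq_square)
  have s3: "floor_sqrt 3 = 1" by (rule floor_sqrt_unique) (auto simp: power2_eq_square)
  have f2: "ff a t 2 = a + 1" using ff_low[of 2 t 1 a] t1 s2 by simp
  have f3: "ff a t 3 = a + 2" using ff_low[of 3 t 2 a] t1 s3 by simp
  have gens: "{enumerate H i | i. 1 \<le> i \<and> i \<le> 3} = S"
  proof -
    have st: "{i::nat. 1 \<le> i \<and> i \<le> 3} = {1,2,3}" by auto
    have "{enumerate H i | i. 1 \<le> i \<and> i \<le> (3::nat)} = (\<lambda>i. enumerate H i) ` {i. 1 \<le> i \<and> i \<le> 3}"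
      by blast
    also have "\<dots> = {a, a+1, a+2}" unfolding st E using f1 f2 f3 by simp
    finally show ?thesis unfolding S_def .
  qed
  have sm: "submonoid_nat G" unfolding submonoid_nat_def G_def
    using gen_add gen_monoid.zero by blast
  have fin: "finite (UNIV - H)"
  proof -
    have "UNIV - H \<subseteq> {..<(t+1)*a}" unfolding HH HH_def by auto
    then show ?thesis using finite_subset by blast
  qed
  have bij: "\<forall>m::nat. bij_betw (\<lambda>j. enumerate H (m * 3 + j) mod 3) {1..3} {..<3}"
  proof
    fix m :: nat
    have m1: "(m*3+1) mod 3 \<noteq> 0" "(m*3+2) mod 3 \<noteq> 0" by presburger+
    have q1: "m*3+2 = Suc (m*3+1)" and q2: "m*3+3 = Suc (m*3+2)" by simp_all
    have p1: "ff a t (m*3+2) mod 3 = Suc (ff a t (m*3+1)) mod 3"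
      by (subst q1) (rule ff_mod[OF amod m1(1)])
    have p2: "ff a t (m*3+3) mod 3 = Suc (ff a t (m*3+2)) mod 3"
      by (subst q2) (rule ff_mod[OF amod m1(2)])
    note p = p1 p2
    show "bij_betw (\<lambda>j. enumerate H (m * 3 + j) mod 3) {1..3} {..<3}"
      unfolding E using bij3[of "\<lambda>j. ff a t (m*3+j)", OF p] .
  qed
  have "perm_numerical_semigroup 3 H"
  proof -
    have e: "H = gen_monoid {enumerate H i | i. 1 \<le> i \<and> i \<le> 3}"
      unfolding gens G_def[symmetric] using GH by simp
    have "submonoid_nat H" using sm GH by simp
    then show ?thesis unfolding perm_numerical_semigroup_def numerical_semigroup_def
      using fin bij e by (intro conjI) assumption+
  qed
  then show ?thesis using GH L L2 by blast
qed

end
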